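(* Let $m,n\ge0$ be integers and $\lambda$ a bipartition. Then $\lambda$ is almost $(m|n)$-cross if and only if its weight diagram $x_\lambda(m-n)$ has the following form: - every vertex $j\le -m-1$ is labelled $\wedge$; - every vertex $j\ge n+2$ is labelled $\vee$; - the $m+n+2$ vertices $-m,-m+1,\dots,n+1$ carry exactly $m+1$ labels $\times$ and $n+1$ labels $\bigcirc$, in some order.
   Context: A partition is a weakly decreasing sequence $\alpha=(\alpha_1,\alpha_2,\dots)$ of nonnegative integers, almost all zero. A bipartition is a pair $\lambda=(\lambda^\bullet,\lambda^\circ)$ of partitions. Containment is componentwise. A bipartition $\lambda$ is $(m|n)$-cross if there exists $k$ with $0\le k\le m$ such that $\lambda^\bullet_{k+1}+\lambda^\circ_{m-k+1}\le n$. It is almost $(m|n)$-cross if it is not $(m|n)$-cross but every bipartition strictly contained in it is $(m|n)$-cross. Set $I_\wedge(\lambda)=\{\lambda^\bullet_i-(i-1):i\ge1\}$ and $I_\vee(\lambda,\delta)=\{i-\delta-\lambda^\circ_i:i\ge1\}$. The weight diagram $x_\lambda(\delta)$ labels each integer $j$ by: - $\bigcirc$ if $j$ is in neither set; - $\wedge$ if $j$ is only in $I_\wedge(\lambda)$; - $\vee$ if $j$ is only in $I_\vee(\lambda,\delta)$; - $\times$ if $j$ is in both. *)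

theory Defs
  imports Main
begin

text \<open>Partitions are encoded 0-based: a function a :: nat => nat with a i
  standing for the paper's alpha_(i+1).\<close>

definition is_partition :: "(nat \<Rightarrow> nat) \<Rightarrow> bool" where
  "is_partition a \<longleftrightarrow> (\<forall>i. a (Suc i) \<le> a i) \<and> finite {i. a i \<noteq> 0}"

type_synonym bipartition = "(nat \<Rightarrow> nat) \<times> (nat \<Rightarrow> nat)"

definition is_bipartition :: "bipartition \<Rightarrow> bool" where
  "is_bipartition l \<longleftrightarrow> is_partition (fst l) \<and> is_partition (snd l)"

definition bp_contained :: "bipartition \<Rightarrow> bipartition \<Rightarrow> bool" where
  "bp_contained mu l \<longleftrightarrow> (\<forall>i. fst mu i \<le> fst l i \<and> snd mu i \<le> snd l i)"

text \<open>(m|n)-cross: exists k with 0 <= k <= m, lambda^bullet_(k+1) + lambda^circ_(m-k+1) <= n.\<close>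
definition is_cross :: "nat \<Rightarrow> nat \<Rightarrow> bipartition \<Rightarrow> bool" where
  "is_cross m n l \<longleftrightarrow> (\<exists>k\<le>m. fst l k + snd l (m - k) \<le> n)"

definition almost_cross :: "nat \<Rightarrow> nat \<Rightarrow> bipartition \<Rightarrow> bool" where
  "almost_cross m n l \<longleftrightarrow> \<not> is_cross m n l \<and>
     (\<forall>mu. is_bipartition mu \<and> bp_contained mu l \<and> mu \<noteq> l \<longrightarrow> is_cross m n mu)"

text \<open>I_wedge = { lambda^bullet_i - (i-1) : i >= 1 }, 0-based: { a i - i : i >= 0 }.\<close>
definition I_wedge :: "bipartition \<Rightarrow> int set" where
  "I_wedge l = {int (fst l i) - int i | i. True}"

text \<open>I_vee = { i - delta - lambda^circ_i : i >= 1 }, 0-based: { (i+1) - delta - b i }.\<close>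
definition I_vee :: "bipartition \<Rightarrow> int \<Rightarrow> int set" where
  "I_vee l d = {int i + 1 - d - int (snd l i) | i. True}"

datatype wlabel = Circ | Up | Down | Cross

definition weight_diagram :: "bipartition \<Rightarrow> int \<Rightarrow> int \<Rightarrow> wlabel" where
  "weight_diagram l d j =
     (if j \<in> I_wedge l \<and> j \<in> I_vee l d then Cross
      else if j \<in> I_wedge l then Up
      else if j \<in> I_vee l d then Down
      else Circ)"

end

theory Submission
  imports Defs
begin

lemma part_mono: "is_partition a \<Longrightarrow> i \<le> j \<Longrightarrow> a j \<le> a i"
  unfolding is_partition_def by (metis lift_Suc_antimono_le)

lemma part_fin_zero:
  assumes "is_partition a" shows "\<exists>N. \<forall>i\<ge>N. a i = 0"
proof -
  have "finite {i. a i \<noteq> 0}" using assms unfolding is_partition_def by auto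
  then obtain N where "\<forall>i\<in>{i. a i \<noteq> 0}. i < N" using finite_nat_set_iff_bounded by blast
  then show ?thesis by (metis leD mem_Collect_eq)
qed

lemma const_zero:
  assumes pa: "is_partition a" and st: "\<And>i. i \<ge> p \<Longrightarrow> a (Suc i) = a i"
  shows "a p = 0"
proof -
  have c: "a (p + t) = a p" for t
    by (induction t) (use st in auto)
  obtain N where "\<forall>i\<ge>N. a i = 0" using part_fin_zero[OF pa] by blast
  then show ?thesis using c[of N] by auto
qed

definition PP :: "nat \<Rightarrow> nat \<Rightarrow> (nat \<Rightarrow> nat) \<Rightarrow> (nat \<Rightarrow> nat) \<Rightarrow> bool" where
  "PP m n a b \<longleftrightarrow> (\<forall>i>m. a i = 0 \<and> b i = 0) \<and> (\<forall>k\<le>m. a k + b (m-k) = n+1)"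

lemma almost_P:
  assumes pa: "is_partition a" and pb: "is_partition b" and ac: "almost_cross m n (a,b)"
  shows "PP m n a b"
proof -
  have nc: "\<And>k. k\<le>m \<Longrightarrow> a k + b (m-k) > n"
    using ac unfolding almost_cross_def is_cross_def by force
  have mn: "\<And>mu. is_bipartition mu \<Longrightarrow> bp_contained mu (a,b) \<Longrightarrow> mu \<noteq> (a,b) \<Longrightarrow> is_cross m n mu"
    using ac unfolding almost_cross_def by blast
  have ma: "\<And>i. a (Suc i) \<le> a i" and mb: "\<And>i. b (Suc i) \<le> b i"
    using pa pb unfolding is_partition_def by auto
  have cornA: "k \<le> m \<and> a k + b (m-k) = n+1" if h: "a (Suc k) < a k" for k
  proof -
    define a' where "a' = a(k := a k - 1)"
    have "is_partition a'" unfolding is_partition_def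
    proof
      show "\<forall>i. a' (Suc i) \<le> a' i"
      proof
        fix i show "a' (Suc i) \<le> a' i" using ma[of i] h by (auto simp: a'_def)
      qed
      have "{i. a' i \<noteq> 0} \<subseteq> {i. a i \<noteq> 0}" unfolding a'_def by auto
      then show "finite {i. a' i \<noteq> 0}" using pa unfolding is_partition_def by (meson finite_subset)
    qed
    then have "is_bipartition (a',b)" using pb unfolding is_bipartition_def by simp
    moreover have "bp_contained (a',b) (a,b)" unfolding bp_contained_def a'_def by auto
    moreover have "a' k \<noteq> a k" using h by (simp add: a'_def)
    then have "(a',b) \<noteq> (a,b)" by auto
    ultimately have "is_cross m n (a',b)" using mn by blast
    then obtain k' where k': "k' \<le> m" "a' k' + b (m-k') \<le> n" unfolding is_cross_def by auto
    have "k' = k"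
    proof (rule ccontr)
      assume "k' \<noteq> k" then have "a' k' = a k'" unfolding a'_def by auto
      then show False using nc[OF k'(1)] k'(2) by auto
    qed
    then show ?thesis using k' nc[of k] h unfolding a'_def by auto
  qed
  have cornB: "j \<le> m \<and> a (m-j) + b j = n+1" if h: "b (Suc j) < b j" for j
  proof -
    define b' where "b' = b(j := b j - 1)"
    have "is_partition b'" unfolding is_partition_def
    proof
      show "\<forall>i. b' (Suc i) \<le> b' i"
      proof
        fix i show "b' (Suc i) \<le> b' i" using mb[of i] h by (auto simp: b'_def)
      qed
      have "{i. b' i \<noteq> 0} \<subseteq> {i. b i \<noteq> 0}" unfolding b'_def by auto
      then show "finite {i. b' i \<noteq> 0}" using pb unfolding is_partition_def by (meson finite_subset)
    qed
    then have "is_bipartition (a,b')" using pa unfolding is_bipartition_def by simp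
    moreover have "bp_contained (a,b') (a,b)" unfolding bp_contained_def b'_def by auto
    moreover have "b' j \<noteq> b j" using h by (simp add: b'_def)
    then have "(a,b') \<noteq> (a,b)" by auto
    ultimately have "is_cross m n (a,b')" using mn by blast
    then obtain k' where k': "k' \<le> m" "a k' + b' (m-k') \<le> n" unfolding is_cross_def by auto
    have "m - k' = j"
    proof (rule ccontr)
      assume "m - k' \<noteq> j" then have "b' (m-k') = b (m-k')" unfolding b'_def by auto
      then show False using nc[OF k'(1)] k'(2) by auto
    qed
    then show ?thesis using k' nc[of k'] h unfolding b'_def by auto
  qed
  have eq: "\<forall>k\<le>m. a k + b (m-k) = n+1"
  proof (rule ccontr)
    assume "\<not> ?thesis"
    then obtain k0 where k0: "k0 \<le> m" "a k0 + b (m-k0) > n+1"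
      using nc by (metis Suc_eq_plus1 Suc_lessI)
    have step: "a (Suc k) = a k \<and> b (Suc (m-k)) = b (m-k)" if "k \<le> m" "a k + b (m-k) > n+1" for k
    proof
      show "a (Suc k) = a k" using ma[of k] cornA[of k] that by (cases "a (Suc k) < a k") auto
      show "b (Suc (m-k)) = b (m-k)" using mb[of "m-k"] cornB[of "m-k"] that
        by (cases "b (Suc (m-k)) < b (m-k)") auto
    qed
    have up: "k0 + t \<le> m \<longrightarrow> a (k0+t) + b (m-(k0+t)) > n+1" for t
    proof (induction t)
      case 0 then show ?case using k0 by simp
    next
      case (Suc t)
      show ?case
      proof
        assume h: "k0 + Suc t \<le> m"
        let ?k = "k0 + t"
        have s: "a ?k + b (m - ?k) > n+1" using Suc h by simp
        have "a (Suc ?k) = a ?k" using step[of ?k] s h by simp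
        moreover have "b (m - Suc ?k) \<ge> b (m - ?k)" using part_mono[OF pb, of "m - Suc ?k" "m - ?k"] by simp
        ultimately show "a (k0 + Suc t) + b (m-(k0+Suc t)) > n+1" using s by simp
      qed
    qed
    have down: "t \<le> k0 \<longrightarrow> a (k0-t) + b (m-(k0-t)) > n+1" for t
    proof (induction t)
      case 0 then show ?case using k0 by simp
    next
      case (Suc t)
      show ?case
      proof
        assume h: "Suc t \<le> k0"
        let ?k = "k0 - t"
        have s: "a ?k + b (m - ?k) > n+1" using Suc h by simp
        have e1: "b (Suc (m-?k)) = b (m - ?k)" using step[of ?k] s h k0 by simp
        have e2: "m - (k0 - Suc t) = Suc (m - ?k)" using h k0 by simp
        have e3: "b (m - (k0 - Suc t)) = b (m - ?k)" by (simp only: e2 e1)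
        have "a (k0 - Suc t) \<ge> a ?k" using part_mono[OF pa, of "k0 - Suc t" ?k] by simp
        then show "a (k0 - Suc t) + b (m-(k0-Suc t)) > n+1" using s e3 by linarith
      qed
    qed
    have all: "a k + b (m-k) > n+1" if "k \<le> m" for k
    proof (cases "k0 \<le> k")
      case True then show ?thesis using up[of "k - k0"] that by simp
    next
      case False then show ?thesis using down[of "k0 - k"] by simp
    qed
    have "a (Suc i) = a i" for i
    proof (cases "i \<le> m")
      case True then show ?thesis using step all by blast
    next
      case False then show ?thesis using cornA[of i] ma[of i] by (meson le_neq_implies_less)
    qed
    then have a0: "a 0 = 0" using const_zero[OF pa, of 0] by blast
    have "b (Suc j) = b j" for j
    proof (cases "j \<le> m")
      case True then show ?thesis using step[of "m-j"] all[of "m-j"] by simp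
    next
      case False then show ?thesis using cornB[of j] mb[of j] by (meson le_neq_implies_less)
    qed
    then have b0: "b 0 = 0" using const_zero[OF pb, of 0] by blast
    have "a k0 = 0" using part_mono[OF pa, of 0 k0] a0 by simp
    moreover have "b (m-k0) = 0" using part_mono[OF pb, of 0 "m-k0"] b0 by simp
    ultimately show False using k0 by simp
  qed
  have za: "a (Suc m) = 0"
    using const_zero[OF pa, of "Suc m"] cornA ma by (metis Suc_le_lessD le_neq_implies_less not_less_eq_eq)
  have zb: "b (Suc m) = 0"
    using const_zero[OF pb, of "Suc m"] cornB mb by (metis Suc_le_lessD le_neq_implies_less not_less_eq_eq)
  have "\<forall>i>m. a i = 0 \<and> b i = 0"
    using part_mono[OF pa, of "Suc m"] part_mono[OF pb, of "Suc m"] za zb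
    by (metis Suc_le_eq le_zero_eq)
  then show ?thesis using eq unfolding PP_def by blast
qed

lemma P_almost:
  assumes P: "PP m n a b"
  shows "almost_cross m n (a,b)"
  unfolding almost_cross_def
proof
  show "\<not> is_cross m n (a,b)" using P unfolding PP_def is_cross_def by auto
  show "\<forall>mu. is_bipartition mu \<and> bp_contained mu (a, b) \<and> mu \<noteq> (a, b) \<longrightarrow> is_cross m n mu"
  proof (intro allI impI)
    fix mu assume h: "is_bipartition mu \<and> bp_contained mu (a, b) \<and> mu \<noteq> (a, b)"
    obtain c e where mu: "mu = (c,e)" by fastforce
    have le: "\<And>i. c i \<le> a i \<and> e i \<le> b i" using h mu unfolding bp_contained_def by auto
    have "\<exists>i. c i \<noteq> a i \<or> e i \<noteq> b i" using h mu by fastforce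
    then obtain i where "c i < a i \<or> e i < b i" using le by (meson le_neq_implies_less)
    then show "is_cross m n mu"
    proof
      assume c: "c i < a i"
      then have im: "i \<le> m" using P unfolding PP_def by (metis not_less_zero not_le)
      have "c i + e (m-i) \<le> n" using c le[of "m-i"] P im unfolding PP_def by fastforce
      then show ?thesis using im mu unfolding is_cross_def by auto
    next
      assume c: "e i < b i"
      then have im: "i \<le> m" using P unfolding PP_def by (metis not_less_zero not_le)
      have "a (m-i) + b (m - (m-i)) = n+1" using P unfolding PP_def by simp
      then have "c (m-i) + e (m-(m-i)) \<le> n" using c le[of "m-i"] im by simp
      then show ?thesis using im mu unfolding is_cross_def by (metis diff_le_self fst_conv snd_conv)
    qed
  qed
qed

declare upt_Suc[simp del]

definition ww :: "(nat \<Rightarrow> nat) \<Rightarrow> nat \<Rightarrow> int" where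
  "ww a i = int (a i) - int i"
definition vv :: "nat \<Rightarrow> nat \<Rightarrow> (nat \<Rightarrow> nat) \<Rightarrow> nat \<Rightarrow> int" where
  "vv m n b i = int i + 1 - (int m - int n) - int (b i)"

lemma Iw: "I_wedge (a,b) = range (ww a)" unfolding I_wedge_def ww_def by auto
lemma Iv: "I_vee (a,b) (int m - int n) = range (vv m n b)" unfolding I_vee_def vv_def by auto

lemma wd_Cross: "weight_diagram l d j = Cross \<longleftrightarrow> j \<in> I_wedge l \<and> j \<in> I_vee l d"
  by (auto simp: weight_diagram_def)
lemma wd_Circ: "weight_diagram l d j = Circ \<longleftrightarrow> j \<notin> I_wedge l \<and> j \<notin> I_vee l d"
  by (auto simp: weight_diagram_def)
lemma wd_Up: "weight_diagram l d j = Up \<longleftrightarrow> j \<in> I_wedge l \<and> j \<notin> I_vee l d"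
  by (auto simp: weight_diagram_def)
lemma wd_Down: "weight_diagram l d j = Down \<longleftrightarrow> j \<notin> I_wedge l \<and> j \<in> I_vee l d"
  by (auto simp: weight_diagram_def)

lemma xs_sorted:
  assumes pa: "is_partition a"
  shows "sorted_wrt (<) (map (\<lambda>i. ww a (m-i)) [0..<Suc m])"
  unfolding sorted_wrt_map
proof (rule sorted_wrt_mono_rel[OF _ sorted_wrt_upt])
  fix x y assume "x \<in> set [0..<Suc m]" "y \<in> set [0..<Suc m]" "x < y"
  then have "m - y < m - x" by auto
  moreover then have "a (m-x) \<le> a (m-y)" using part_mono[OF pa] by auto
  ultimately show "ww a (m-x) < ww a (m-y)" unfolding ww_def by simp
qed

lemma ys_sorted:
  assumes pb: "is_partition b"
  shows "sorted_wrt (<) (map (vv m n b) [0..<Suc m])"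
  unfolding sorted_wrt_map
proof (rule sorted_wrt_mono_rel[OF _ sorted_wrt_upt])
  fix x y assume "x \<in> set [0..<Suc m]" "y \<in> set [0..<Suc m]" "x < y"
  moreover then have "b y \<le> b x" using part_mono[OF pb] by auto
  ultimately show "vv m n b x < vv m n b y" unfolding vv_def by simp
qed

lemma window:
  assumes za: "\<forall>i>m. a i = 0" and zb: "\<forall>i>m. b i = 0"
    and ba: "\<forall>i. a i \<le> n+1" and bb: "\<forall>i. b i \<le> n+1"
  shows "set (map (\<lambda>i. ww a (m-i)) [0..<Suc m]) \<subseteq> {- int m .. int n + 1}"
    and "set (map (vv m n b) [0..<Suc m]) \<subseteq> {- int m .. int n + 1}"
    and "\<And>j. j \<in> {- int m .. int n + 1} \<Longrightarrow> j \<in> range (ww a) \<longleftrightarrow> j \<in> set (map (\<lambda>i. ww a (m-i)) [0..<Suc m])"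
    and "\<And>j. j \<in> {- int m .. int n + 1} \<Longrightarrow> j \<in> range (vv m n b) \<longleftrightarrow> j \<in> set (map (vv m n b) [0..<Suc m])"
proof -
  show "set (map (\<lambda>i. ww a (m-i)) [0..<Suc m]) \<subseteq> {- int m .. int n + 1}"
  proof
    fix x assume "x \<in> set (map (\<lambda>i. ww a (m-i)) [0..<Suc m])"
    then obtain i where "i \<le> m" "x = ww a (m-i)" by (auto simp: less_Suc_eq_le)
    then show "x \<in> {- int m .. int n + 1}" using ba[rule_format, of "m-i"] unfolding ww_def by auto
  qed
  show "set (map (vv m n b) [0..<Suc m]) \<subseteq> {- int m .. int n + 1}"
  proof
    fix x assume "x \<in> set (map (vv m n b) [0..<Suc m])"
    then obtain i where "i \<le> m" "x = vv m n b i" by (auto simp: less_Suc_eq_le)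
    then show "x \<in> {- int m .. int n + 1}" using bb[rule_format, of i] unfolding vv_def by auto
  qed
  fix j assume jW: "j \<in> {- int m .. int n + 1}"
  show "j \<in> range (ww a) \<longleftrightarrow> j \<in> set (map (\<lambda>i. ww a (m-i)) [0..<Suc m])"
  proof
    assume "j \<in> range (ww a)"
    then obtain p where p: "j = ww a p" by auto
    have "p \<le> m"
    proof (rule ccontr)
      assume "\<not> p \<le> m" then have "a p = 0" using za by auto
      then show False using p jW \<open>\<not> p \<le> m\<close> unfolding ww_def by auto
    qed
    then have "j = ww a (m - (m-p))" using p by simp
    then show "j \<in> set (map (\<lambda>i. ww a (m-i)) [0..<Suc m])" by auto
  qed auto
  show "j \<in> range (vv m n b) \<longleftrightarrow> j \<in> set (map (vv m n b) [0..<Suc m])"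
  proof
    assume "j \<in> range (vv m n b)"
    then obtain p where p: "j = vv m n b p" by auto
    have "p \<le> m"
    proof (rule ccontr)
      assume "\<not> p \<le> m" then have "b p = 0" using zb by auto
      then show False using p jW \<open>\<not> p \<le> m\<close> unfolding vv_def by auto
    qed
    then show "j \<in> set (map (vv m n b) [0..<Suc m])" using p by auto
  qed auto
qed

abbreviation WDC :: "nat \<Rightarrow> nat \<Rightarrow> bipartition \<Rightarrow> bool" where
  "WDC m n l \<equiv> ((\<forall>j::int. j \<le> - int m - 1 \<longrightarrow> weight_diagram l (int m - int n) j = Up) \<and>
     (\<forall>j::int. j \<ge> int n + 2 \<longrightarrow> weight_diagram l (int m - int n) j = Down) \<and>
     card {j \<in> {- int m .. int n + 1}. weight_diagram l (int m - int n) j = Cross} = m + 1 \<and>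
     card {j \<in> {- int m .. int n + 1}. weight_diagram l (int m - int n) j = Circ} = n + 1)"

lemma P_WD:
  assumes pa: "is_partition a" and pb: "is_partition b" and P: "PP m n a b"
  shows "WDC m n (a,b)"
proof -
  have za: "\<forall>i>m. a i = 0" and zb: "\<forall>i>m. b i = 0" and eq: "\<And>k. k \<le> m \<Longrightarrow> a k + b (m-k) = n+1"
    using P unfolding PP_def by auto
  have ba: "\<forall>i. a i \<le> n+1"
  proof
    fix i show "a i \<le> n+1" using eq[of i] za by (cases "i \<le> m") auto
  qed
  have bb: "\<forall>i. b i \<le> n+1"
  proof
    fix i show "b i \<le> n+1" using eq[of "m-i"] zb by (cases "i \<le> m") auto
  qed
  define xs where "xs = map (\<lambda>i. ww a (m-i)) [0..<Suc m]"
  define ys where "ys = map (vv m n b) [0..<Suc m]"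
  have xy: "xs = ys" unfolding xs_def ys_def
  proof (rule map_cong[OF refl])
    fix i assume "i \<in> set [0..<Suc m]"
    then have im: "i \<le> m" by auto
    then have "a (m-i) + b i = n+1" using eq[of "m-i"] by simp
    then show "ww a (m-i) = vv m n b i" unfolding ww_def vv_def using im by linarith
  qed
  note w = window[OF za zb ba bb, folded xs_def ys_def]
  let ?W = "{- int m .. int n + 1}"
  have up: "\<forall>j::int. j \<le> - int m - 1 \<longrightarrow> weight_diagram (a,b) (int m - int n) j = Up"
  proof (intro allI impI)
    fix j :: int assume j: "j \<le> - int m - 1"
    have "ww a (nat (-j)) = j" using za j unfolding ww_def by auto
    then have "j \<in> range (ww a)" by (metis rangeI)
    moreover have "j \<notin> range (vv m n b)"
    proof
      assume "j \<in> range (vv m n b)"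
      then obtain p where "j = vv m n b p" by auto
      then show False using bb[rule_format, of p] j unfolding vv_def by auto
    qed
    ultimately show "weight_diagram (a,b) (int m - int n) j = Up" by (simp add: wd_Up Iw Iv)
  qed
  have down: "\<forall>j::int. j \<ge> int n + 2 \<longrightarrow> weight_diagram (a,b) (int m - int n) j = Down"
  proof (intro allI impI)
    fix j :: int assume j: "j \<ge> int n + 2"
    have "vv m n b (nat (j - int n - 1 + int m)) = j" using zb j unfolding vv_def by auto
    then have "j \<in> range (vv m n b)" by (metis rangeI)
    moreover have "j \<notin> range (ww a)"
    proof
      assume "j \<in> range (ww a)"
      then obtain p where "j = ww a p" by auto
      then show False using ba[rule_format, of p] j unfolding ww_def by auto
    qed
    ultimately show "weight_diagram (a,b) (int m - int n) j = Down" by (simp add: wd_Down Iw Iv)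
  qed
  have w3: "j \<in> ?W \<Longrightarrow> j \<in> range (ww a) \<longleftrightarrow> j \<in> set xs" for j using w(3) by blast
  have w4: "j \<in> ?W \<Longrightarrow> j \<in> range (vv m n b) \<longleftrightarrow> j \<in> set xs" for j using w(4) xy by blast
  have "{j \<in> ?W. weight_diagram (a,b) (int m - int n) j = Cross} = {j \<in> ?W. j \<in> range (ww a) \<and> j \<in> range (vv m n b)}"
    by (simp add: wd_Cross Iw Iv)
  also have "\<dots> = set xs" using w(1) w3 w4 by blast
  finally have cs: "{j \<in> ?W. weight_diagram (a,b) (int m - int n) j = Cross} = set xs" .
  have "{j \<in> ?W. weight_diagram (a,b) (int m - int n) j = Circ} = {j \<in> ?W. j \<notin> range (ww a) \<and> j \<notin> range (vv m n b)}"
    by (simp add: wd_Circ Iw Iv)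
  also have "\<dots> = ?W - set xs" using w(1) w3 w4 by blast
  finally have os: "{j \<in> ?W. weight_diagram (a,b) (int m - int n) j = Circ} = ?W - set xs" .
  have "distinct xs" using xs_sorted[OF pa, of m, folded xs_def] strict_sorted_iff by blast
  then have cx: "card (set xs) = m + 1" using distinct_card[of xs] by (simp add: xs_def)
  have "card (?W - set xs) = card ?W - card (set xs)" using w(1) by (simp add: card_Diff_subset)
  also have "\<dots> = n + 1" using cx by simp
  finally show ?thesis using up down cs os cx by simp
qed

lemma WD_P:
  assumes pa: "is_partition a" and pb: "is_partition b" and H: "WDC m n (a,b)"
  shows "PP m n a b"
proof -
  have U: "\<And>j. j \<le> - int m - 1 \<Longrightarrow> j \<in> range (ww a) \<and> j \<notin> range (vv m n b)"
    using H by (simp add: wd_Up Iw Iv)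
  have D: "\<And>j. j \<ge> int n + 2 \<Longrightarrow> j \<notin> range (ww a) \<and> j \<in> range (vv m n b)"
    using H by (simp add: wd_Down Iw Iv)
  have a0: "a 0 \<le> n+1"
  proof (rule ccontr)
    assume "\<not> a 0 \<le> n+1"
    then have "ww a 0 \<ge> int n + 2" unfolding ww_def by simp
    then show False using D[of "ww a 0"] by auto
  qed
  have ba: "\<forall>i. a i \<le> n+1" using a0 part_mono[OF pa, of 0] by (meson le_trans zero_le)
  have b0: "b 0 \<le> n+1"
  proof (rule ccontr)
    assume "\<not> b 0 \<le> n+1"
    then have "vv m n b 0 \<le> - int m - 1" unfolding vv_def by simp
    then show False using U[of "vv m n b 0"] by auto
  qed
  have bb: "\<forall>i. b i \<le> n+1" using b0 part_mono[OF pb, of 0] by (meson le_trans zero_le)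
  obtain Na where Na: "\<forall>i\<ge>Na. a i = 0" using part_fin_zero[OF pa] by blast
  have zat: "\<forall>i. m < i \<longrightarrow> Na \<le> i + t \<longrightarrow> a i = 0" for t
  proof (induction t)
    case 0 then show ?case using Na by simp
  next
    case (Suc t)
    show ?case
    proof (intro allI impI)
      fix i assume i: "m < i" "Na \<le> i + Suc t"
      have hi: "\<And>p. p > i \<Longrightarrow> a p = 0" using Suc i by auto
      have "- int i \<le> - int m - 1" using i by simp
      then obtain p where p: "- int i = ww a p" using U by blast
      have "p = i"
      proof (rule ccontr)
        assume "p \<noteq> i"
        then consider "p > i" | "p < i" by linarith
        then show False
        proof cases
          case 1 then show False using hi[of p] p unfolding ww_def by simp
        next
          case 2 then show False using p unfolding ww_def by simp
        qed
      qed
      then show "a i = 0" using p unfolding ww_def by simp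
    qed
  qed
  have za: "\<forall>i>m. a i = 0" using zat[of Na] by auto
  obtain Nb where Nb: "\<forall>i\<ge>Nb. b i = 0" using part_fin_zero[OF pb] by blast
  have zbt: "\<forall>i. m < i \<longrightarrow> Nb \<le> i + t \<longrightarrow> b i = 0" for t
  proof (induction t)
    case 0 then show ?case using Nb by simp
  next
    case (Suc t)
    show ?case
    proof (intro allI impI)
      fix i assume i: "m < i" "Nb \<le> i + Suc t"
      have hi: "\<And>p. p > i \<Longrightarrow> b p = 0" using Suc i by auto
      have "int i + 1 - (int m - int n) \<ge> int n + 2" using i by simp
      then obtain p where p: "int i + 1 - (int m - int n) = vv m n b p" using D by blast
      have "p = i"
      proof (rule ccontr)
        assume "p \<noteq> i"
        then consider "p > i" | "p < i" by linarith
        then show False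
        proof cases
          case 1 then show False using hi[of p] p unfolding vv_def by simp
        next
          case 2 then show False using p unfolding vv_def by simp
        qed
      qed
      then show "b i = 0" using p unfolding vv_def by simp
    qed
  qed
  have zb: "\<forall>i>m. b i = 0" using zbt[of Nb] by auto
  define xs where "xs = map (\<lambda>i. ww a (m-i)) [0..<Suc m]"
  define ys where "ys = map (vv m n b) [0..<Suc m]"
  note w = window[OF za zb ba bb, folded xs_def ys_def]
  let ?W = "{- int m .. int n + 1}"
  have w3: "j \<in> ?W \<Longrightarrow> j \<in> range (ww a) \<longleftrightarrow> j \<in> set xs" for j using w(3) by blast
  have w4: "j \<in> ?W \<Longrightarrow> j \<in> range (vv m n b) \<longleftrightarrow> j \<in> set ys" for j using w(4) by blast
  have "{j \<in> ?W. weight_diagram (a,b) (int m - int n) j = Cross} = {j \<in> ?W. j \<in> range (ww a) \<and> j \<in> range (vv m n b)}"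
    by (simp add: wd_Cross Iw Iv)
  also have "\<dots> = set xs \<inter> set ys" using w(1) w3 w4 by blast
  finally have cs: "card (set xs \<inter> set ys) = m + 1" using H by simp
  have sx: "sorted_wrt (<) xs" using xs_sorted[OF pa, of m] xs_def by simp
  have sy: "sorted_wrt (<) ys" using ys_sorted[OF pb, of m n] ys_def by simp
  have "distinct xs" using sx strict_sorted_iff by blast
  then have cx: "card (set xs) = m + 1" using distinct_card[of xs] by (simp add: xs_def)
  have "distinct ys" using sy strict_sorted_iff by blast
  then have cy: "card (set ys) = m + 1" using distinct_card[of ys] by (simp add: ys_def)
  have "set xs \<inter> set ys = set xs" using card_subset_eq[of "set xs" "set xs \<inter> set ys"] cs cx by auto
  then have "set xs \<subseteq> set ys" by blast
  then have "set xs = set ys" using card_subset_eq[of "set ys" "set xs"] cx cy by auto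
  then have xy: "xs = ys" using strict_sorted_equal[OF sy sx] by simp
  have eq: "a k + b (m-k) = n+1" if k: "k \<le> m" for k
  proof -
    have u: "[0..<Suc m] ! (m-k) = m - k" using k nth_upt[of 0 "m-k" "Suc m"] by simp
    have x1: "xs ! (m-k) = ww a (m - (m-k))" unfolding xs_def using k
      by (subst nth_map_upt) auto
    have y1: "ys ! (m-k) = vv m n b (m-k)" unfolding ys_def using k
      by (subst nth_map_upt) auto
    have "ww a (m - (m-k)) = vv m n b (m-k)" using xy x1 y1 by simp
    then have "ww a k = vv m n b (m-k)" using k by simp
    then show ?thesis unfolding ww_def vv_def using k by linarith
  qed
  show ?thesis unfolding PP_def using za zb eq by blast
qed

theorem proposition2p7:
  fixes m n :: nat and l :: bipartition
  assumes "is_bipartition l"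
  shows "almost_cross m n l \<longleftrightarrow>
    ((\<forall>j::int. j \<le> - int m - 1 \<longrightarrow> weight_diagram l (int m - int n) j = Up) \<and>
     (\<forall>j::int. j \<ge> int n + 2 \<longrightarrow> weight_diagram l (int m - int n) j = Down) \<and>
     card {j \<in> {- int m .. int n + 1}. weight_diagram l (int m - int n) j = Cross} = m + 1 \<and>
     card {j \<in> {- int m .. int n + 1}. weight_diagram l (int m - int n) j = Circ} = n + 1)"
proof -
  obtain a b where l: "l = (a,b)" by fastforce
  have pa: "is_partition a" and pb: "is_partition b" using assms l unfolding is_bipartition_def by auto
  show ?thesis unfolding l
    using almost_P[OF pa pb] P_almost P_WD[OF pa pb] WD_P[OF pa pb] by blast
qed

end
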